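(* Consider the clique inference problem with nonnegative vertex potentials and the Potts clique potential $C(\mathbf{v})=\lambda\sum_{v\in V}n_v(\mathbf{v})^2$ with $\lambda>0$. Let $\hat{\mathbf{v}}$ be the assignment returned by the $\alpha$-pass algorithm and $\mathbf{v}^*$ an assignment maximizing $F$. Then $F(\hat{\mathbf{v}})\ge\frac{4}{5}F(\mathbf{v}^* )$.
   Context: Clique inference problem: there are $n$ vertices $1,\dots,n$, a finite set $V$ of values ($|V|\ge 2$), real vertex potentials $\psi_{jv}$ ($1\le j\le n$, $v\in V$), and a clique potential $C$ depending only on the counts $n_v(\mathbf{v})=|\{j:v_j=v\}|$. The objective is $F(\mathbf{v})=\sum_{j=1}^n\psi_{jv_j}+C(\mathbf{v})$ over $\mathbf{v}\in V^n$. The $\alpha$-pass algorithm: for each $\alpha\in V$, sort the vertices in decreasing order of $\psi_{j\alpha}-\max_{v\neq\alpha}\psi_{jv}$; for each $k\in\{1,\dots,n\}$ form the assignment giving the first $k$ sorted vertices the value $\alpha$ and every other vertex a value $v\ne\alpha$ maximizing $\psi_{jv}$; output the formed assignment with the largest $F$ over all $\alpha$ and $k$. *)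

theory Defs
  imports Complex_Main
begin

text \<open>Vertices are 1..n; an assignment is a function nat => 'v (only values on 1..n matter).
  psi j v is the vertex potential of vertex j taking value v.\<close>

definition valid_assignment :: "nat \<Rightarrow> 'v set \<Rightarrow> (nat \<Rightarrow> 'v) \<Rightarrow> bool" where
  "valid_assignment n V a \<longleftrightarrow> (\<forall>j\<in>{1..n}. a j \<in> V)"

definition cnt :: "nat \<Rightarrow> (nat \<Rightarrow> 'v) \<Rightarrow> 'v \<Rightarrow> nat" where
  "cnt n a v = card {j \<in> {1..n}. a j = v}"

definition potts :: "real \<Rightarrow> nat \<Rightarrow> 'v set \<Rightarrow> (nat \<Rightarrow> 'v) \<Rightarrow> real" where
  "potts lam n V a = lam * (\<Sum>v\<in>V. (real (cnt n a v))^2)"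

definition objF :: "nat \<Rightarrow> 'v set \<Rightarrow> (nat \<Rightarrow> 'v \<Rightarrow> real) \<Rightarrow> real \<Rightarrow> (nat \<Rightarrow> 'v) \<Rightarrow> real" where
  "objF n V psi lam a = (\<Sum>j\<in>{1..n}. psi j (a j)) + potts lam n V a"

definition best_other :: "'v set \<Rightarrow> (nat \<Rightarrow> 'v \<Rightarrow> real) \<Rightarrow> 'v \<Rightarrow> nat \<Rightarrow> real" where
  "best_other V psi alpha j = Max ((psi j) ` (V - {alpha}))"

definition alpha_key :: "'v set \<Rightarrow> (nat \<Rightarrow> 'v \<Rightarrow> real) \<Rightarrow> 'v \<Rightarrow> nat \<Rightarrow> real" where
  "alpha_key V psi alpha j = psi j alpha - best_other V psi alpha j"

definition valid_order :: "nat \<Rightarrow> 'v set \<Rightarrow> (nat \<Rightarrow> 'v \<Rightarrow> real) \<Rightarrow> 'v \<Rightarrow> nat list \<Rightarrow> bool" where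
  "valid_order n V psi alpha ord \<longleftrightarrow>
     distinct ord \<and> set ord = {1..n} \<and>
     sorted_wrt (\<lambda>i j. alpha_key V psi alpha j \<le> alpha_key V psi alpha i) ord"

definition valid_choice :: "nat \<Rightarrow> 'v set \<Rightarrow> (nat \<Rightarrow> 'v \<Rightarrow> real) \<Rightarrow> ('v \<Rightarrow> nat \<Rightarrow> 'v) \<Rightarrow> bool" where
  "valid_choice n V psi beta \<longleftrightarrow>
     (\<forall>alpha\<in>V. \<forall>j\<in>{1..n}. beta alpha j \<in> V - {alpha} \<and>
        psi j (beta alpha j) = best_other V psi alpha j)"

text \<open>Assignment formed in the alpha-pass for value alpha and prefix length k.\<close>
definition formed :: "('v \<Rightarrow> nat list) \<Rightarrow> ('v \<Rightarrow> nat \<Rightarrow> 'v) \<Rightarrow> 'v \<Rightarrow> nat \<Rightarrow> (nat \<Rightarrow> 'v)" where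
  "formed ord beta alpha k = (\<lambda>j. if j \<in> set (take k (ord alpha)) then alpha else beta alpha j)"

end

theory Submission
  imports Defs
begin

lemma exchange:
  fixes d :: "nat \<Rightarrow> real"
  assumes fS: "finite S" and fT: "finite T" and cS: "card S = card T"
    and dom: "\<And>x y. x \<in> S \<Longrightarrow> y \<in> T \<Longrightarrow> y \<notin> S \<Longrightarrow> d y \<le> d x"
  shows "sum d T \<le> sum d S"
proof -
  have cc: "card (S - T) = card (T - S)"
  proof -
    have "card S = card (S \<inter> T) + card (S - T)"
      by (metis Int_Diff_disjoint Int_Diff_Un card_Un_disjoint fS finite_Diff finite_Int)
    moreover have "card T = card (T \<inter> S) + card (T - S)"
      by (metis Int_Diff_disjoint Int_Diff_Un card_Un_disjoint fT finite_Diff finite_Int)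
    ultimately show ?thesis using cS by (simp add: Int_commute)
  qed
  have "sum d (T - S) \<le> sum d (S - T)"
  proof (cases "S - T = {}")
    case True
    then have "card (T - S) = 0" using cc by (metis card.empty)
    then have "T - S = {}" using fT by simp
    then show ?thesis using True by simp
  next
    case False
    define c where "c = Min (d ` (S - T))"
    have c1: "\<And>x. x \<in> S - T \<Longrightarrow> c \<le> d x" unfolding c_def using fS by auto
    have c2: "\<And>y. y \<in> T - S \<Longrightarrow> d y \<le> c"
    proof -
      fix y assume y: "y \<in> T - S"
      have "c \<in> d ` (S - T)" unfolding c_def using False fS by (intro Min_in) auto
      then obtain x where "x \<in> S - T" "c = d x" by auto
      then show "d y \<le> c" using dom y by auto
    qed
    have "sum d (T - S) \<le> of_nat (card (T - S)) * c"
      using sum_bounded_above[of "T - S" d c] c2 by simp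
    also have "\<dots> = of_nat (card (S - T)) * c" using cc by simp
    also have "\<dots> \<le> sum d (S - T)"
      using sum_bounded_below[of "S - T" c d] c1 by simp
    finally show ?thesis .
  qed
  moreover have "sum d S = sum d (S \<inter> T) + sum d (S - T)"
    by (metis add.commute fS sum.Int_Diff)
  moreover have "sum d T = sum d (S \<inter> T) + sum d (T - S)"
    by (metis Int_commute add.commute fT sum.Int_Diff)
  ultimately show ?thesis by simp
qed

lemma split_sum:
  fixes a b :: "nat \<Rightarrow> real"
  assumes "finite I" "T \<subseteq> I"
  shows "(\<Sum>j\<in>I. if j \<in> T then a j else b j) = sum b I + sum (\<lambda>j. a j - b j) T"
proof -
  have "(\<Sum>j\<in>I. if j \<in> T then a j else b j) = (\<Sum>j\<in>I. b j + (if j \<in> T then a j - b j else 0))"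
    by (rule sum.cong) auto
  also have "\<dots> = sum b I + (\<Sum>j\<in>I. if j \<in> T then a j - b j else 0)"
    by (simp add: sum.distrib)
  also have "(\<Sum>j\<in>I. if j \<in> T then a j - b j else 0) = sum (\<lambda>j. a j - b j) T"
    using assms by (simp add: sum.inter_restrict[symmetric] Int_absorb1 Int_commute)
  finally show ?thesis .
qed

theorem theorem3:
  fixes n :: nat and V :: "'v set" and psi :: "nat \<Rightarrow> 'v \<Rightarrow> real" and lam :: real
    and ord :: "'v \<Rightarrow> nat list" and beta :: "'v \<Rightarrow> nat \<Rightarrow> 'v"
    and vhat vstar :: "nat \<Rightarrow> 'v"
  assumes finV: "finite V" and cardV: "card V \<ge> 2"
    and psi_nonneg: "\<forall>j\<in>{1..n}. \<forall>v\<in>V. psi j v \<ge> 0"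
    and lam_pos: "lam > 0"
    and ord_ok: "\<forall>alpha\<in>V. valid_order n V psi alpha (ord alpha)"
    and beta_ok: "valid_choice n V psi beta"
    and vhat_formed: "\<exists>alpha\<in>V. \<exists>k\<in>{1..n}. vhat = formed ord beta alpha k"
    and vhat_best: "\<forall>alpha\<in>V. \<forall>k\<in>{1..n}.
                      objF n V psi lam (formed ord beta alpha k) \<le> objF n V psi lam vhat"
    and vstar_valid: "valid_assignment n V vstar"
    and vstar_opt: "\<forall>a. valid_assignment n V a \<longrightarrow> objF n V psi lam a \<le> objF n V psi lam vstar"
  shows "objF n V psi lam vhat \<ge> 4/5 * objF n V psi lam vstar"
proof -
  have n1: "n \<ge> 1" using vhat_formed by auto
  have Vne: "V \<noteq> {}" using cardV by auto
  obtain alpha where aV: "alpha \<in> V" and amax: "\<forall>v\<in>V. cnt n vstar v \<le> cnt n vstar alpha"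
  proof -
    have "Max (cnt n vstar ` V) \<in> cnt n vstar ` V" using finV Vne by (intro Max_in) auto
    then obtain alpha where "alpha \<in> V" "cnt n vstar alpha = Max (cnt n vstar ` V)" by auto
    moreover have "\<forall>v\<in>V. cnt n vstar v \<le> Max (cnt n vstar ` V)" using finV by auto
    ultimately show ?thesis using that by metis
  qed
  define I where "I = {1..n}"
  define m where "m = cnt n vstar alpha"
  define L where "L = ord alpha"
  define S where "S = set (take m L)"
  define T where "T = {j\<in>I. vstar j = alpha}"
  define a where "a = (\<lambda>j. psi j alpha)"
  define b where "b = best_other V psi alpha"
  define d where "d = (\<lambda>j. a j - b j)"
  define f where "f = formed ord beta alpha m"
  define g where "g = formed ord beta alpha n"
  have fI: "finite I" unfolding I_def by simp
  have vo: "valid_order n V psi alpha L" using ord_ok aV unfolding L_def by auto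
  have Ldist: "distinct L" and Lset: "set L = I"
    and Lsort: "sorted_wrt (\<lambda>i j. alpha_key V psi alpha j \<le> alpha_key V psi alpha i) L"
    using vo unfolding valid_order_def I_def by auto
  have Llen: "length L = n" using distinct_card[OF Ldist] Lset unfolding I_def by simp
  have TI: "T \<subseteq> I" unfolding T_def by auto
  have mT: "card T = m" unfolding T_def m_def cnt_def I_def by simp
  have mn: "m \<le> n" using mT card_mono[OF fI TI] unfolding I_def by simp
  have m1: "m \<ge> 1"
  proof -
    have "vstar 1 \<in> V" using vstar_valid n1 unfolding valid_assignment_def by auto
    then have "cnt n vstar (vstar 1) \<le> m" using amax m_def by auto
    moreover have "cnt n vstar (vstar 1) \<ge> 1"
    proof -
      have "1 \<in> {j \<in> {1..n}. vstar j = vstar 1}" using n1 by auto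
      then have "{j \<in> {1..n}. vstar j = vstar 1} \<noteq> {}" by blast
      then show ?thesis unfolding cnt_def by (simp add: Suc_le_eq card_gt_0_iff)
    qed
    ultimately show ?thesis by simp
  qed
  have cS: "card S = m" unfolding S_def using distinct_card[of "take m L"] Ldist Llen mn by simp
  have SI: "S \<subseteq> I" unfolding S_def using set_take_subset[of m L] Lset by simp
  have ak: "\<And>j. alpha_key V psi alpha j = d j" unfolding d_def a_def b_def alpha_key_def by simp
  have dom: "\<And>x y. x \<in> S \<Longrightarrow> y \<in> T \<Longrightarrow> y \<notin> S \<Longrightarrow> d y \<le> d x"
  proof -
    fix x y assume x: "x \<in> S" and y: "y \<in> T" and yS: "y \<notin> S"
    have "y \<in> set L" using y TI Lset by auto
    then have yd: "y \<in> set (drop m L)" using yS unfolding S_def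
      by (metis Un_iff append_take_drop_id set_append)
    have "sorted_wrt (\<lambda>i j. d j \<le> d i) (take m L @ drop m L)" using Lsort ak by simp
    then have "sorted_wrt (\<lambda>i j. d j \<le> d i) (take m L) \<and> sorted_wrt (\<lambda>i j. d j \<le> d i) (drop m L) \<and> (\<forall>u\<in>set (take m L). \<forall>w\<in>set (drop m L). d w \<le> d u)"
      by (rule iffD1[OF sorted_wrt_append])
    then have "\<forall>u\<in>set (take m L). \<forall>w\<in>set (drop m L). d w \<le> d u" by (elim conjE)
    then show "d y \<le> d x" using x yd unfolding S_def by simp
  qed
  have exch: "sum d T \<le> sum d S"
  proof (rule exchange[OF finite_subset[OF SI fI] finite_subset[OF TI fI]])
    show "card S = card T" using cS mT by simp
  next
    fix x y assume "x \<in> S" "y \<in> T" "y \<notin> S"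
    then show "d y \<le> d x" by (rule dom)
  qed
  have beta1: "\<And>j. j \<in> I \<Longrightarrow> beta alpha j \<in> V - {alpha} \<and> psi j (beta alpha j) = b j"
    using beta_ok aV unfolding valid_choice_def b_def I_def by auto
  have psif: "(\<Sum>j\<in>I. psi j (f j)) = (\<Sum>j\<in>I. if j \<in> S then a j else b j)"
    by (rule sum.cong) (auto simp: f_def formed_def S_def a_def beta1 L_def)
  have psistar: "(\<Sum>j\<in>I. psi j (vstar j)) \<le> (\<Sum>j\<in>I. if j \<in> T then a j else b j)"
  proof (rule sum_mono)
    fix j assume j: "j \<in> I"
    show "psi j (vstar j) \<le> (if j \<in> T then a j else b j)"
    proof (cases "j \<in> T")
      case True then show ?thesis unfolding T_def a_def by auto
    next
      case False
      then have "vstar j \<in> V - {alpha}" using j vstar_valid unfolding T_def valid_assignment_def I_def by auto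
      then have "psi j (vstar j) \<le> Max ((psi j) ` (V - {alpha}))" using finV by (intro Max_ge) auto
      then show ?thesis using False unfolding b_def best_other_def by simp
    qed
  qed
  have Psi: "(\<Sum>j\<in>I. psi j (vstar j)) \<le> (\<Sum>j\<in>I. psi j (f j))"
    using psistar psif split_sum[OF fI TI, of a b] split_sum[OF fI SI, of a b] exch
    unfolding d_def by linarith
  have Pnn: "(\<Sum>j\<in>I. psi j (vstar j)) \<ge> 0"
    using psi_nonneg vstar_valid unfolding valid_assignment_def I_def by (intro sum_nonneg) auto
  have cntf: "cnt n f alpha = m"
  proof -
    have "{j \<in> {1..n}. f j = alpha} = S"
      using SI beta1 unfolding f_def formed_def I_def S_def L_def by auto
    then show ?thesis unfolding cnt_def using cS by simp
  qed
  have pot_lb: "\<And>h. lam * (real (cnt n h alpha))^2 \<le> potts lam n V h"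
  proof -
    fix h
    have "(real (cnt n h alpha))^2 \<le> (\<Sum>v\<in>V. (real (cnt n h v))^2)"
      using finV aV by (intro member_le_sum) auto
    then show "lam * (real (cnt n h alpha))^2 \<le> potts lam n V h"
      unfolding potts_def using lam_pos by simp
  qed
  have Ff: "objF n V psi lam f \<ge> (\<Sum>j\<in>I. psi j (vstar j)) + lam * (real m)^2"
    using Psi pot_lb[of f] cntf unfolding objF_def I_def by simp
  have cntg: "cnt n g alpha = n"
  proof -
    have "take n L = L" using Llen by simp
    then have "{j \<in> {1..n}. g j = alpha} = {1..n}" using Lset unfolding g_def formed_def I_def L_def by auto
    then show ?thesis unfolding cnt_def by simp
  qed
  have psig: "(\<Sum>j\<in>I. psi j (g j)) \<ge> 0"
  proof (rule sum_nonneg)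
    fix j assume "j \<in> I"
    then show "psi j (g j) \<ge> 0" using psi_nonneg aV beta1[of j]
      unfolding g_def formed_def I_def by auto
  qed
  have Fg: "objF n V psi lam g \<ge> lam * (real n)^2"
    using psig pot_lb[of g] cntg unfolding objF_def I_def by simp
  have Fhf: "objF n V psi lam f \<le> objF n V psi lam vhat" using vhat_best aV m1 mn unfolding f_def by auto
  have Fhg: "objF n V psi lam g \<le> objF n V psi lam vhat" using vhat_best aV n1 unfolding g_def by auto
  have sumcnt: "(\<Sum>v\<in>V. cnt n vstar v) = n"
  proof -
    have "card (\<Union>v\<in>V. {j\<in>{1..n}. vstar j = v}) = (\<Sum>v\<in>V. card {j\<in>{1..n}. vstar j = v})"
      using finV by (intro card_UN_disjoint) auto
    moreover have "(\<Union>v\<in>V. {j\<in>{1..n}. vstar j = v}) = {1..n}"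
      using vstar_valid unfolding valid_assignment_def by auto
    ultimately show ?thesis unfolding cnt_def by simp
  qed
  have potstar: "potts lam n V vstar \<le> lam * (real m * real n)"
  proof -
    have "(\<Sum>v\<in>V. (real (cnt n vstar v))^2) \<le> (\<Sum>v\<in>V. real m * real (cnt n vstar v))"
    proof (rule sum_mono)
      fix v assume "v \<in> V"
      then have "real (cnt n vstar v) \<le> real m" using amax m_def by auto
      then show "(real (cnt n vstar v))^2 \<le> real m * real (cnt n vstar v)"
        by (simp add: power2_eq_square mult_right_mono)
    qed
    also have "\<dots> = real m * (\<Sum>v\<in>V. real (cnt n vstar v))"
      by (simp add: sum_distrib_left)
    also have "(\<Sum>v\<in>V. real (cnt n vstar v)) = real n"
      using sumcnt by (metis of_nat_sum)
    finally show ?thesis unfolding potts_def using lam_pos by simp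
  qed
  have Fstar: "objF n V psi lam vstar \<le> (\<Sum>j\<in>I. psi j (vstar j)) + lam * (real m * real n)"
    using potstar unfolding objF_def I_def by simp
  have sq: "lam * (2 * real m - real n)^2 \<ge> 0" using lam_pos by simp
  then have sq': "4 * (lam * (real m)^2) + lam * (real n)^2 \<ge> 4 * (lam * (real m * real n))"
    by (simp add: power2_eq_square algebra_simps)
  show ?thesis using Ff Fg Fhf Fhg Fstar Pnn sq' by linarith
qed

end
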